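(* Let $y_1\sim\mathcal N(\mu_1,1)$ and $y_2\sim\mathcal N(\mu_2,1)$ be independent, $\hat\gamma=\arg\max_{\gamma\in\{1,2\}}y_\gamma$, and fix $\alpha\in(0,1)$, $\nu\in(0,\alpha)$. Define $\widehat\Gamma^+_\nu=\{1,2\}$ if $|y_2-y_1|\le2\sqrt2\,q^\nu(1)$ and $\widehat\Gamma^+_\nu=\{\hat\gamma\}$ otherwise. Then $$P\left\{\mu_{\hat\gamma}\in\left(y_{\hat\gamma}\pm q^{\alpha-\nu}(|\widehat\Gamma^+_\nu|)\right)\right\}\ge1-\alpha.$$
   Context: For $k\in\{1,2\}$ and $\beta\in(0,1)$, $q^\beta(k)$ denotes the $1-\beta$ quantile of $\max_{i\in[k]}|Z_i|$ with $Z_1,\dots,Z_k$ i.i.d. $\mathcal N(0,1)$. *)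

theory Defs
  imports "HOL-Probability.Probability"
begin

definition std_normal_measure :: "real measure" where
  "std_normal_measure = density lborel (\<lambda>x. ennreal (std_normal_density x))"

(* CDF of max_{i<k} |Z_i| with Z_0,...,Z_{k-1} iid N(0,1) *)
definition max_abs_cdf :: "nat \<Rightarrow> real \<Rightarrow> real" where
  "max_abs_cdf k t = measure (PiM {..<k} (\<lambda>_. std_normal_measure)) (PiE {..<k} (\<lambda>_. {-t..t}))"

definition q :: "real \<Rightarrow> nat \<Rightarrow> real" where
  "q \<beta> k = Inf {t. 1 - \<beta> \<le> max_abs_cdf k t}"

(* selected index gamma_hat = argmax_{gamma in {1,2}} y_gamma (ties -> 1, a null event) *)
definition gamma_hat :: "real \<Rightarrow> real \<Rightarrow> nat" where
  "gamma_hat y1 y2 = (if y2 \<le> y1 then 1 else 2)"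

definition Gamma_plus :: "real \<Rightarrow> real \<Rightarrow> real \<Rightarrow> nat set" where
  "Gamma_plus \<nu> y1 y2 =
     (if \<bar>y2 - y1\<bar> \<le> 2 * sqrt 2 * q \<nu> 1 then {1, 2} else {gamma_hat y1 y2})"

end

theory Submission
  imports Defs
begin


definition Fn :: "real \<Rightarrow> real" where
  "Fn t = measure std_normal_measure {-t..t}"

lemma psN: "prob_space std_normal_measure"
  unfolding std_normal_measure_def by (rule prob_space_normal_density) simp

lemma sets_N[simp, measurable_cong]: "sets std_normal_measure = sets borel"
  unfolding std_normal_measure_def by simp

lemma max_abs_cdf_eq: "max_abs_cdf k t = Fn t ^ k"
proof -
  interpret P: prob_space std_normal_measure by (rule psN)
  interpret PS: product_sigma_finite "\<lambda>_::nat. std_normal_measure"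
    unfolding product_sigma_finite_def by (simp add: P.sigma_finite_measure_axioms)
  interpret PP: prob_space "PiM {..<k} (\<lambda>_. std_normal_measure)"
    by (rule prob_space_PiM) (simp add: psN)
  have "emeasure (PiM {..<k} (\<lambda>_. std_normal_measure)) (PiE {..<k} (\<lambda>_. {-t..t}))
     = (\<Prod>i\<in>{..<k}. emeasure std_normal_measure {-t..t})"
    by (rule PS.emeasure_PiM) auto
  then have "ennreal (max_abs_cdf k t) = ennreal (Fn t ^ k)"
    unfolding max_abs_cdf_def Fn_def
    by (simp add: PP.emeasure_eq_measure P.emeasure_eq_measure ennreal_power)
  then show ?thesis
    by (simp add: Fn_def max_abs_cdf_def ennreal_inj)
qed

lemma Fn_nonneg: "0 \<le> Fn t" by (simp add: Fn_def)
lemma Fn_le1: "Fn t \<le> 1"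
proof - interpret P: prob_space std_normal_measure by (rule psN)
  show ?thesis by (simp add: Fn_def) qed
lemma Fn_neg: "t < 0 \<Longrightarrow> Fn t = 0" by (simp add: Fn_def)
lemma Fn_mono: "s \<le> t \<Longrightarrow> Fn s \<le> Fn t"
proof - interpret P: prob_space std_normal_measure by (rule psN)
  assume "s \<le> t" then show ?thesis unfolding Fn_def
    by (intro P.finite_measure_mono) auto qed

lemma Fn_lim: "(\<lambda>n. Fn (real n)) \<longlonglongrightarrow> 1"
proof -
  interpret P: prob_space std_normal_measure by (rule psN)
  have "(\<lambda>n. measure std_normal_measure ((\<lambda>n. {- real n..real n}) n)) \<longlonglongrightarrow>
      measure std_normal_measure (\<Union> ((\<lambda>n. {- real n..real n}) ` UNIV))"
    by (rule P.finite_Lim_measure_incseq) (auto simp: incseq_def)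
  moreover have "(\<Union> ((\<lambda>n. {- real n..real n}) ` UNIV)) = UNIV"
  proof (auto)
    fix x :: real obtain n where "\<bar>x\<bar> \<le> real n" using real_arch_simple by blast
    then show "\<exists>n. - real n \<le> x \<and> x \<le> real n" by (intro exI[of _ n]) auto
  qed
  moreover have "measure std_normal_measure UNIV = 1"
    using P.prob_space by (simp add: std_normal_measure_def)
  ultimately show ?thesis by (simp add: Fn_def)
qed

lemma Fn_right: "(\<lambda>n. Fn (t + 1 / Suc n)) \<longlonglongrightarrow> Fn t"
proof -
  interpret P: prob_space std_normal_measure by (rule psN)
  have "(\<lambda>n. measure std_normal_measure ((\<lambda>n. {- (t + 1 / Suc n)..t + 1 / Suc n}) n)) \<longlonglongrightarrow>
      measure std_normal_measure (\<Inter> ((\<lambda>n. {- (t + 1 / Suc n)..t + 1 / Suc n}) ` UNIV))"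
  proof (rule P.finite_Lim_measure_decseq)
    show "decseq (\<lambda>n. {- (t + 1 / Suc n)..t + 1 / Suc n})"
      unfolding decseq_def
    proof (intro allI impI subsetI)
      fix m n :: nat and x assume "m \<le> n" "x \<in> {- (t + 1 / Suc n)..t + 1 / Suc n}"
      moreover have "1 / real (Suc n) \<le> 1 / Suc m" using \<open>m \<le> n\<close> by (simp add: frac_le)
      ultimately show "x \<in> {- (t + 1 / Suc m)..t + 1 / Suc m}" by auto
    qed
  qed auto
  moreover have "(\<Inter> ((\<lambda>n. {- (t + 1 / Suc n)..t + 1 / Suc n}) ` UNIV)) = {-t..t}"
  proof (auto)
    fix x :: real assume H: "\<forall>n. - t - 1 / (1 + real n) \<le> x \<and> x \<le> t + 1 / (1 + real n)"
    show "-t \<le> x"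
    proof (rule ccontr)
      assume "\<not> - t \<le> x"
      then obtain n where "1 / Suc n < -t - x" using reals_Archimedean[of "-t-x"]
        by (auto simp: field_simps inverse_eq_divide)
      then show False using H[rule_format, of n] by auto
    qed
    show "x \<le> t"
    proof (rule ccontr)
      assume "\<not> x \<le> t"
      then obtain n where "1 / Suc n < x - t" using reals_Archimedean[of "x-t"]
        by (auto simp: field_simps inverse_eq_divide)
      then show False using H[rule_format, of n] by auto
    qed
  next
    fix x :: real and n :: nat assume "-t \<le> x" "x \<le> t"
    moreover have "0 \<le> 1 / (1 + real n)" by simp
    ultimately show "- t - 1 / (1 + real n) \<le> x" "x \<le> t + 1 / (1 + real n)" by linarith+
  qed
  ultimately show ?thesis by (simp add: Fn_def)
qed

lemma q_prop:
  assumes "0 < \<beta>" "\<beta> < 1" "1 \<le> k"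
  shows "1 - \<beta> \<le> Fn (q \<beta> k) ^ k" "0 \<le> q \<beta> k"
proof -
  define S where "S = {t. 1 - \<beta> \<le> Fn t ^ k}"
  have qS: "q \<beta> k = Inf S" unfolding q_def S_def max_abs_cdf_eq ..
  have lb: "0 \<le> t" if "t \<in> S" for t
  proof (rule ccontr)
    assume "\<not> 0 \<le> t" then have "Fn t = 0" by (simp add: Fn_neg)
    then show False using that assms by (simp add: S_def zero_power)
  qed
  have bdd: "bdd_below S" using lb by (auto simp: bdd_below_def)
  have "(\<lambda>n. Fn (real n) ^ k) \<longlonglongrightarrow> 1 ^ k" by (intro tendsto_power Fn_lim)
  then have "\<forall>\<^sub>F n in sequentially. 1 - \<beta> < Fn (real n) ^ k"
    using assms by (intro order_tendstoD(1)) auto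
  then obtain n where "1 - \<beta> < Fn (real n) ^ k" by (auto simp: eventually_sequentially)
  then have ne: "S \<noteq> {}" unfolding S_def by (auto intro!: exI[of _ "real n"])
  show "0 \<le> q \<beta> k" unfolding qS using ne lb by (intro cInf_greatest) auto
  have mem: "q \<beta> k + 1 / Suc n \<in> S" for n
  proof -
    have "Inf S < Inf S + 1 / Suc n" by simp
    then obtain x where "x \<in> S" "x < Inf S + 1 / Suc n"
      using cInf_less_iff[OF ne bdd] by blast
    moreover have "Fn x ^ k \<le> Fn (Inf S + 1 / Suc n) ^ k"
      using calculation by (intro power_mono Fn_mono Fn_nonneg) auto
    ultimately show ?thesis unfolding qS S_def by auto
  qed
  have "(\<lambda>n. Fn (q \<beta> k + 1 / Suc n) ^ k) \<longlonglongrightarrow> Fn (q \<beta> k) ^ k"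
    by (intro tendsto_power Fn_right)
  then show "1 - \<beta> \<le> Fn (q \<beta> k) ^ k"
    by (rule LIMSEQ_le_const) (use mem in \<open>auto simp: S_def\<close>)
qed

lemma q_mono:
  assumes "0 < \<beta>" "\<beta> < 1"
  shows "q \<beta> 1 \<le> q \<beta> 2"
proof -
  define S where "S k = {t. 1 - \<beta> \<le> Fn t ^ k}" for k :: nat
  have qS: "q \<beta> k = Inf (S k)" for k unfolding q_def S_def max_abs_cdf_eq ..
  have "q \<beta> 2 \<in> S 2" using q_prop[OF assms, of 2] by (simp add: S_def)
  then have ne: "S 2 \<noteq> {}" by auto
  have lb: "0 \<le> t" if "t \<in> S 1" for t
  proof (rule ccontr)
    assume "\<not> 0 \<le> t" then have "Fn t = 0" by (simp add: Fn_neg)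
    then show False using that assms by (simp add: S_def)
  qed
  have "S 2 \<subseteq> S 1"
  proof
    fix t assume "t \<in> S 2"
    moreover have "Fn t ^ 2 \<le> Fn t" using Fn_nonneg[of t] Fn_le1[of t]
      by (simp add: power2_eq_square mult_left_le)
    ultimately show "t \<in> S 1" by (auto simp: S_def)
  qed
  moreover have "bdd_below (S 1)" using lb by (auto simp: bdd_below_def)
  ultimately show ?thesis unfolding qS using ne
    by (intro cInf_superset_mono) auto
qed

lemma open_Fn: "measure std_normal_measure {-t<..<t} = Fn t"
proof (cases "t < 0")
  case True then show ?thesis by (simp add: Fn_neg)
next
  case False
  have eq: "{-t..t} = {-t<..<t} \<union> {-t, t}" using False by auto
  have nl: "{-t, t} \<in> null_sets std_normal_measure"
  proof -
    have "AE x in lborel. x \<notin> {-t,t}" by (intro AE_not_in finite_imp_null_set_lborel) auto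
    then have "AE x in lborel. x \<in> {-t,t} \<longrightarrow> ennreal (std_normal_density x) = 0"
      by (rule eventually_mono) auto
    then show ?thesis unfolding std_normal_measure_def
      by (subst null_sets_density_iff) auto
  qed
  have "measure std_normal_measure ({-t<..<t} \<union> {-t,t}) = measure std_normal_measure {-t<..<t}"
    by (rule measure_Un_null_set) (use nl in simp_all)
  then show ?thesis unfolding Fn_def eq by simp
qed

lemma (in prob_space) std_meas:
  assumes "distributed M lborel X std_normal_density" "A \<in> sets borel"
  shows "prob {\<omega>\<in>space M. X \<omega> \<in> A} = measure std_normal_measure A"
proof -
  have "prob {\<omega>\<in>space M. X \<omega> \<in> A} = prob (X -` A \<inter> space M)"
    by (intro arg_cong[where f=prob]) auto
  also have "\<dots> = measure (distr M lborel X) A"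
    using distributed_measurable[OF assms(1)] assms(2) by (subst measure_distr) auto
  also have "\<dots> = measure std_normal_measure A"
    using distributed_distr_eq_density[OF assms(1)] by (simp add: std_normal_measure_def)
  finally show ?thesis .
qed

lemma (in prob_space) normal_abs_lt:
  assumes "distributed M lborel X (\<lambda>x. ennreal (normal_density m 1 x))"
  shows "prob {\<omega>\<in>space M. \<bar>X \<omega> - m\<bar> < t} = Fn t"
proof -
  have "distributed M lborel (\<lambda>x. (X x - m) / 1) std_normal_density"
    using normal_standard_normal_convert[of 1 X m] assms by simp
  then have D: "distributed M lborel (\<lambda>x. X x - m) std_normal_density" by simp
  have "prob {\<omega>\<in>space M. \<bar>X \<omega> - m\<bar> < t} = prob {\<omega>\<in>space M. X \<omega> - m \<in> {-t<..<t}}"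
    by (intro arg_cong[where f=prob]) auto
  also have "\<dots> = Fn t" using std_meas[OF D, of "{-t<..<t}"] open_Fn[of t] by simp
  finally show ?thesis .
qed

lemma (in prob_space) normal_abs_le:
  assumes "distributed M lborel X (\<lambda>x. ennreal (normal_density m \<sigma> x))" "0 < \<sigma>"
  shows "prob {\<omega>\<in>space M. \<bar>X \<omega> - m\<bar> \<le> \<sigma> * t} = Fn t"
proof -
  have D: "distributed M lborel (\<lambda>x. (X x - m) / \<sigma>) std_normal_density"
    using normal_standard_normal_convert[of \<sigma> X m] assms by simp
  have "prob {\<omega>\<in>space M. \<bar>X \<omega> - m\<bar> \<le> \<sigma> * t} = prob {\<omega>\<in>space M. (X \<omega> - m) / \<sigma> \<in> {-t..t}}"
  proof (intro arg_cong[where f=prob] Collect_cong conj_cong refl)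
    fix \<omega>
    have "\<bar>X \<omega> - m\<bar> \<le> \<sigma> * t \<longleftrightarrow> \<bar>(X \<omega> - m) / \<sigma>\<bar> \<le> t"
    proof -
      have "\<bar>(X \<omega> - m) / \<sigma>\<bar> = \<bar>X \<omega> - m\<bar> / \<sigma>" using assms(2) by (simp add: abs_divide)
      also have "\<dots> \<le> t \<longleftrightarrow> \<bar>X \<omega> - m\<bar> \<le> t * \<sigma>" using assms(2) by (rule pos_divide_le_eq)
      finally show ?thesis by (simp add: mult_ac)
    qed
    moreover have "((X \<omega> - m) / \<sigma> \<in> {- t..t}) = (\<bar>(X \<omega> - m) / \<sigma>\<bar> \<le> t)"
      using abs_le_iff[of "(X \<omega> - m) / \<sigma>" t] by auto
    ultimately show "(\<bar>X \<omega> - m\<bar> \<le> \<sigma> * t) = ((X \<omega> - m) / \<sigma> \<in> {- t..t})" by simp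
  qed
  also have "\<dots> = Fn t" unfolding Fn_def by (rule std_meas[OF D]) simp
  finally show ?thesis .
qed

lemma (in prob_space) inter_ge:
  assumes "A \<in> events" "B \<in> events"
  shows "prob A + prob B - 1 \<le> prob (A \<inter> B)"
proof -
  have "prob (A \<union> B) = prob A + prob B - prob (A \<inter> B)"
    using assms by (intro measure_Un3) (auto simp: fmeasurable_def less_top[symmetric])
  moreover have "prob (A \<union> B) \<le> 1" by simp
  ultimately show ?thesis by simp
qed

lemma card_Gp: "card (Gamma_plus \<nu> a b) = 1 \<or> card (Gamma_plus \<nu> a b) = 2"
  by (simp add: Gamma_plus_def)



lemma mem_ival: "((m::real) \<in> {y - c<..<y + c}) = (\<bar>y - m\<bar> < c)" by auto

theorem mainTheorem9:
  fixes M :: "'a measure" and Y :: "nat \<Rightarrow> 'a \<Rightarrow> real" and \<mu> :: "nat \<Rightarrow> real"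
    and \<alpha> \<nu> :: real
  assumes "prob_space M"
    and "distributed M lborel (Y 1) (\<lambda>x. ennreal (normal_density (\<mu> 1) 1 x))"
    and "distributed M lborel (Y 2) (\<lambda>x. ennreal (normal_density (\<mu> 2) 1 x))"
    and "prob_space.indep_var M borel (Y 1) borel (Y 2)"
    and "0 < \<alpha>" and "\<alpha> < 1" and "0 < \<nu>" and "\<nu> < \<alpha>"
  shows "measure M {\<omega> \<in> space M.
           (let g = gamma_hat (Y 1 \<omega>) (Y 2 \<omega>);
                c = q (\<alpha> - \<nu>) (card (Gamma_plus \<nu> (Y 1 \<omega>) (Y 2 \<omega>)))
            in \<mu> g \<in> {Y g \<omega> - c <..< Y g \<omega> + c})} \<ge> 1 - \<alpha>"
proof -
  interpret prob_space M by fact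
  note D1 = assms(2) and D2 = assms(3) and I = assms(4)
  have m1[measurable]: "Y 1 \<in> borel_measurable M" using distributed_measurable[OF D1] by simp
  have m2[measurable]: "Y 2 \<in> borel_measurable M" using distributed_measurable[OF D2] by simp
  define \<beta> where "\<beta> = \<alpha> - \<nu>"
  have b: "0 < \<beta>" "\<beta> < 1" using assms by (auto simp: \<beta>_def)
  define Q1 where "Q1 = q \<beta> 1"
  define Q2 where "Q2 = q \<beta> 2"
  define s where "s = sqrt 2 * q \<nu> 1"
  have Q12: "Q1 \<le> Q2" unfolding Q1_def Q2_def by (rule q_mono[OF b])
  have FQ1: "1 - \<beta> \<le> Fn Q1" using q_prop(1)[OF b, of 1] by (simp add: Q1_def)
  have FQ2: "1 - \<beta> \<le> Fn Q2 * Fn Q2" using q_prop(1)[OF b, of 2] by (simp add: Q2_def power2_eq_square)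
  have Fnu: "1 - \<nu> \<le> Fn (q \<nu> 1)" using q_prop(1)[of \<nu> 1] assms by simp
  define S where "S = {\<omega> \<in> space M.
           (let g = gamma_hat (Y 1 \<omega>) (Y 2 \<omega>);
                c = q (\<alpha> - \<nu>) (card (Gamma_plus \<nu> (Y 1 \<omega>) (Y 2 \<omega>)))
            in \<mu> g \<in> {Y g \<omega> - c <..< Y g \<omega> + c})}"
  define T where "T = 2 * sqrt 2 * q \<nu> 1"
  have Seq: "S = {\<omega> \<in> space M.
     (Y 2 \<omega> \<le> Y 1 \<omega> \<and> \<bar>Y 2 \<omega> - Y 1 \<omega>\<bar> \<le> T \<and> \<bar>Y 1 \<omega> - \<mu> 1\<bar> < Q2) \<or>
     (Y 2 \<omega> \<le> Y 1 \<omega> \<and> \<not> \<bar>Y 2 \<omega> - Y 1 \<omega>\<bar> \<le> T \<and> \<bar>Y 1 \<omega> - \<mu> 1\<bar> < Q1) \<or>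
     (\<not> Y 2 \<omega> \<le> Y 1 \<omega> \<and> \<bar>Y 2 \<omega> - Y 1 \<omega>\<bar> \<le> T \<and> \<bar>Y 2 \<omega> - \<mu> 2\<bar> < Q2) \<or>
     (\<not> Y 2 \<omega> \<le> Y 1 \<omega> \<and> \<not> \<bar>Y 2 \<omega> - Y 1 \<omega>\<bar> \<le> T \<and> \<bar>Y 2 \<omega> - \<mu> 2\<bar> < Q1)}"
    unfolding S_def
  proof (intro Collect_cong conj_cong refl)
    fix \<omega>
    show "(let g = gamma_hat (Y 1 \<omega>) (Y 2 \<omega>);
                c = q (\<alpha> - \<nu>) (card (Gamma_plus \<nu> (Y 1 \<omega>) (Y 2 \<omega>)))
            in \<mu> g \<in> {Y g \<omega> - c <..< Y g \<omega> + c}) =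
     ((Y 2 \<omega> \<le> Y 1 \<omega> \<and> \<bar>Y 2 \<omega> - Y 1 \<omega>\<bar> \<le> T \<and> \<bar>Y 1 \<omega> - \<mu> 1\<bar> < Q2) \<or>
     (Y 2 \<omega> \<le> Y 1 \<omega> \<and> \<not> \<bar>Y 2 \<omega> - Y 1 \<omega>\<bar> \<le> T \<and> \<bar>Y 1 \<omega> - \<mu> 1\<bar> < Q1) \<or>
     (\<not> Y 2 \<omega> \<le> Y 1 \<omega> \<and> \<bar>Y 2 \<omega> - Y 1 \<omega>\<bar> \<le> T \<and> \<bar>Y 2 \<omega> - \<mu> 2\<bar> < Q2) \<or>
     (\<not> Y 2 \<omega> \<le> Y 1 \<omega> \<and> \<not> \<bar>Y 2 \<omega> - Y 1 \<omega>\<bar> \<le> T \<and> \<bar>Y 2 \<omega> - \<mu> 2\<bar> < Q1))"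
      (is "?L = ?R")
    proof (cases "Y 2 \<omega> \<le> Y 1 \<omega>"; cases "\<bar>Y 2 \<omega> - Y 1 \<omega>\<bar> \<le> T")
      assume "Y 2 \<omega> \<le> Y 1 \<omega>" "\<bar>Y 2 \<omega> - Y 1 \<omega>\<bar> \<le> T"
      then show ?thesis unfolding Let_def gamma_hat_def Gamma_plus_def mem_ival
        by (simp add: T_def Q2_def \<beta>_def numeral_2_eq_2)
    next
      assume "Y 2 \<omega> \<le> Y 1 \<omega>" "\<not> \<bar>Y 2 \<omega> - Y 1 \<omega>\<bar> \<le> T"
      then show ?thesis unfolding Let_def gamma_hat_def Gamma_plus_def mem_ival
        by (simp add: T_def Q1_def \<beta>_def numeral_2_eq_2)
    next
      assume "\<not> Y 2 \<omega> \<le> Y 1 \<omega>" "\<bar>Y 2 \<omega> - Y 1 \<omega>\<bar> \<le> T"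
      then show ?thesis unfolding Let_def gamma_hat_def Gamma_plus_def mem_ival
        by (simp add: T_def Q2_def \<beta>_def numeral_2_eq_2)
    next
      assume "\<not> Y 2 \<omega> \<le> Y 1 \<omega>" "\<not> \<bar>Y 2 \<omega> - Y 1 \<omega>\<bar> \<le> T"
      then show ?thesis unfolding Let_def gamma_hat_def Gamma_plus_def mem_ival
        by (simp add: T_def Q1_def \<beta>_def numeral_2_eq_2)
    qed
  qed
  have Smeas: "S \<in> sets M" unfolding Seq by measurable
  define ED where "ED = {\<omega> \<in> space M. \<bar>(Y 2 \<omega> - Y 1 \<omega>) - (\<mu> 2 - \<mu> 1)\<bar> \<le> sqrt 2 * q \<nu> 1}"
  have EDm: "ED \<in> sets M" unfolding ED_def by measurable
  have DD: "distributed M lborel (\<lambda>x. Y 1 x - Y 2 x) (normal_density (\<mu> 1 - \<mu> 2) (sqrt (1\<^sup>2 + 1\<^sup>2)))"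
    by (rule diff_indep_normal[OF I]) (use D1 D2 in auto)
  have EDe: "ED = {\<omega>\<in>space M. \<bar>(Y 1 \<omega> - Y 2 \<omega>) - (\<mu> 1 - \<mu> 2)\<bar> \<le> sqrt (1\<^sup>2 + 1\<^sup>2) * q \<nu> 1}"
    unfolding ED_def
  proof (intro Collect_cong conj_cong refl)
    fix \<omega>
    have "\<bar>(Y 2 \<omega> - Y 1 \<omega>) - (\<mu> 2 - \<mu> 1)\<bar> = \<bar>(Y 1 \<omega> - Y 2 \<omega>) - (\<mu> 1 - \<mu> 2)\<bar>"
      by (simp add: abs_minus_commute algebra_simps)
    then show "(\<bar>(Y 2 \<omega> - Y 1 \<omega>) - (\<mu> 2 - \<mu> 1)\<bar> \<le> sqrt 2 * q \<nu> 1) =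
      (\<bar>(Y 1 \<omega> - Y 2 \<omega>) - (\<mu> 1 - \<mu> 2)\<bar> \<le> sqrt (1\<^sup>2 + 1\<^sup>2) * q \<nu> 1)" by simp
  qed
  have PED: "1 - \<nu> \<le> prob ED"
    using normal_abs_le[OF DD, of "q \<nu> 1"] Fnu unfolding EDe by simp
  define E1 where "E1 t = {\<omega> \<in> space M. \<bar>Y 1 \<omega> - \<mu> 1\<bar> < t}" for t
  define E2 where "E2 t = {\<omega> \<in> space M. \<bar>Y 2 \<omega> - \<mu> 2\<bar> < t}" for t
  have E1m: "E1 t \<in> sets M" for t unfolding E1_def by measurable
  have E2m: "E2 t \<in> sets M" for t unfolding E2_def by measurable
  have PE1: "prob (E1 t) = Fn t" for t unfolding E1_def by (rule normal_abs_lt[OF D1])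
  have PE2: "prob (E2 t) = Fn t" for t unfolding E2_def by (rule normal_abs_lt[OF D2])
  have PE12: "prob (E1 t \<inter> E2 t) = Fn t * Fn t" for t
  proof -
    have "prob ((\<lambda>x. (Y 1 x, Y 2 x)) -` ({\<mu> 1 - t<..<\<mu> 1 + t} \<times> {\<mu> 2 - t<..<\<mu> 2 + t}) \<inter> space M) =
      prob (Y 1 -` {\<mu> 1 - t<..<\<mu> 1 + t} \<inter> space M) * prob (Y 2 -` {\<mu> 2 - t<..<\<mu> 2 + t} \<inter> space M)"
      by (rule indep_varD[OF I]) auto
    moreover have "(\<lambda>x. (Y 1 x, Y 2 x)) -` ({\<mu> 1 - t<..<\<mu> 1 + t} \<times> {\<mu> 2 - t<..<\<mu> 2 + t}) \<inter> space M
       = E1 t \<inter> E2 t" by (auto simp: E1_def E2_def abs_less_iff)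
    moreover have "Y 1 -` {\<mu> 1 - t<..<\<mu> 1 + t} \<inter> space M = E1 t" by (auto simp: E1_def abs_less_iff)
    moreover have "Y 2 -` {\<mu> 2 - t<..<\<mu> 2 + t} \<inter> space M = E2 t" by (auto simp: E2_def abs_less_iff)
    ultimately show ?thesis using PE1 PE2 by simp
  qed
  have sT: "T = 2 * s" unfolding T_def s_def by simp
  show ?thesis
  proof (cases "\<bar>\<mu> 2 - \<mu> 1\<bar> \<le> s")
    case True
    define G where "G = ED \<inter> (E1 Q2 \<inter> E2 Q2)"
    have "G \<subseteq> S"
    proof
      fix \<omega> assume "\<omega> \<in> G"
      then have "\<omega> \<in> space M" "\<bar>(Y 2 \<omega> - Y 1 \<omega>) - (\<mu> 2 - \<mu> 1)\<bar> \<le> s"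
        "\<bar>Y 1 \<omega> - \<mu> 1\<bar> < Q2" "\<bar>Y 2 \<omega> - \<mu> 2\<bar> < Q2"
        by (auto simp: G_def ED_def E1_def E2_def s_def)
      moreover have "\<bar>Y 2 \<omega> - Y 1 \<omega>\<bar> \<le> T" using calculation(2) True sT by linarith
      ultimately show "\<omega> \<in> S" unfolding Seq by blast
    qed
    moreover have "1 - \<alpha> \<le> prob G"
    proof -
      have "prob ED + prob (E1 Q2 \<inter> E2 Q2) - 1 \<le> prob G"
        unfolding G_def by (intro inter_ge EDm E1m E2m sets.Int)
      then show ?thesis using PED PE12[of Q2] FQ2 by (simp add: \<beta>_def)
    qed
    ultimately show ?thesis
      unfolding S_def[symmetric] using finite_measure_mono[OF _ Smeas, of G] by linarith
  next
    case False
    show ?thesis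
    proof (cases "\<mu> 1 < \<mu> 2")
      case True
      define G where "G = ED \<inter> E2 Q1"
      have "G \<subseteq> S"
      proof
        fix \<omega> assume "\<omega> \<in> G"
        then have "\<omega> \<in> space M" "\<bar>(Y 2 \<omega> - Y 1 \<omega>) - (\<mu> 2 - \<mu> 1)\<bar> \<le> s"
          "\<bar>Y 2 \<omega> - \<mu> 2\<bar> < Q1"
          by (auto simp: G_def ED_def E2_def s_def)
        moreover have "s < \<mu> 2 - \<mu> 1" using True False by (simp add: abs_if split: if_splits)
        moreover have "\<not> Y 2 \<omega> \<le> Y 1 \<omega>" using calculation(2) calculation(4) unfolding abs_le_iff by linarith
        moreover have "\<bar>Y 2 \<omega> - \<mu> 2\<bar> < Q2" using calculation(3) Q12 by linarith
        ultimately show "\<omega> \<in> S" unfolding Seq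
          by (cases "\<bar>Y 2 \<omega> - Y 1 \<omega>\<bar> \<le> T") simp_all
      qed
      moreover have "1 - \<alpha> \<le> prob G"
      proof -
        have "prob ED + prob (E2 Q1) - 1 \<le> prob G"
          unfolding G_def by (intro inter_ge EDm E2m)
        then show ?thesis using PED PE2[of Q1] FQ1 by (simp add: \<beta>_def)
      qed
      ultimately show ?thesis
        unfolding S_def[symmetric] using finite_measure_mono[OF _ Smeas, of G] by linarith
    next
      case False2: False
      define G where "G = ED \<inter> E1 Q1"
      have "G \<subseteq> S"
      proof
        fix \<omega> assume "\<omega> \<in> G"
        then have "\<omega> \<in> space M" "\<bar>(Y 2 \<omega> - Y 1 \<omega>) - (\<mu> 2 - \<mu> 1)\<bar> \<le> s"
          "\<bar>Y 1 \<omega> - \<mu> 1\<bar> < Q1"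
          by (auto simp: G_def ED_def E1_def s_def)
        moreover have "s < \<mu> 1 - \<mu> 2" using False2 False by (simp add: abs_if split: if_splits)
        moreover have "Y 2 \<omega> \<le> Y 1 \<omega>" using calculation(2) calculation(4) unfolding abs_le_iff by linarith
        moreover have "\<bar>Y 1 \<omega> - \<mu> 1\<bar> < Q2" using calculation(3) Q12 by linarith
        ultimately show "\<omega> \<in> S" unfolding Seq
          by (cases "\<bar>Y 2 \<omega> - Y 1 \<omega>\<bar> \<le> T") simp_all
      qed
      moreover have "1 - \<alpha> \<le> prob G"
      proof -
        have "prob ED + prob (E1 Q1) - 1 \<le> prob G"
          unfolding G_def by (intro inter_ge EDm E1m)
        then show ?thesis using PED PE1[of Q1] FQ1 by (simp add: \<beta>_def)
      qed
      ultimately show ?thesis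
        unfolding S_def[symmetric] using finite_measure_mono[OF _ Smeas, of G] by linarith
    qed
  qed
qed

end
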